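(* Let $q$ be a prime power, $n\ge 1$, and let $\ell$ be an integer with $1\le \ell\le n(q-1)$ and $\ell\equiv 0\pmod{q-1}$. Then the all-ones vector $\mathbf{1}=(1,\dots,1)\in\mathbb{F}_q^N$ does not lie in $C_{n,\ell}^q$. In particular, $C_{n,n(q-1)}^q$ is an LCD code, i.e. $C_{n,n(q-1)}^q\cap (C_{n,n(q-1)}^q)^\perp=\{0\}$.
   Context: For a prime power $q$ and integers $n\ge 1$, $k\ge 0$, the projective Reed-Muller code $C_{n,k}^q\subseteq \mathbb{F}_q^N$, $N=\frac{q^{n+1}-1}{q-1}$, is defined as follows. For each point of $\mathbb{P}^n(\mathbb{F}_q)$ choose the affine representative $(p_0,\dots,p_n)\in\mathbb{F}_q^{n+1}\setminus\{0\}$ whose left-most nonzero coordinate equals $1$, and fix an ordering $P_1',\dots,P_N'$ of these representatives. Then $C_{n,k}^q=\{(F(P_1'),\dots,F(P_N')) : F\in \mathbb{F}_q[x_0,\dots,x_n]_k\}$, where $\mathbb{F}_q[x_0,\dots,x_n]_k$ is the space of homogeneous polynomials of degree $k$ together with $0$. For $C\subseteq\mathbb{F}_q^N$ linear, $C^\perp=\{y:\sum_i y_ic_i=0\ \forall c\in C\}$ (standard dot product), and $\operatorname{Hull}(C)=C\cap C^\perp$. $C$ is LCD if $\operatorname{Hull}(C)=\{0\}$. *)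

theory Defs
  imports Main
begin

text \<open>Points of P^n(F_q): the normalized affine representatives
  (p_0,...,p_n) (functions nat => 'a vanishing above n) whose left-most
  nonzero coordinate equals 1.\<close>
definition proj_reps :: "nat \<Rightarrow> (nat \<Rightarrow> 'a::field) set" where
  "proj_reps n = {p. (\<forall>i>n. p i = 0) \<and> (\<exists>i\<le>n. p i \<noteq> 0)
                      \<and> p (LEAST i. p i \<noteq> 0) = 1}"

definition monomials :: "nat \<Rightarrow> nat \<Rightarrow> (nat \<Rightarrow> nat) set" where
  "monomials n k = {a. (\<forall>i>n. a i = 0) \<and> (\<Sum>i\<le>n. a i) = k}"

definition hom_poly_eval ::
  "nat \<Rightarrow> nat \<Rightarrow> ((nat \<Rightarrow> nat) \<Rightarrow> 'a::field) \<Rightarrow> (nat \<Rightarrow> 'a) \<Rightarrow> 'a" where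
  "hom_poly_eval n k c p = (\<Sum>a\<in>monomials n k. c a * (\<Prod>i\<le>n. p i ^ a i))"

text \<open>Words of F_q^N are functions on the index set proj_reps n (the N points),
  extended by 0 outside it. The projective Reed-Muller code C_{n,k}.\<close>
definition proj_RM :: "nat \<Rightarrow> nat \<Rightarrow> ((nat \<Rightarrow> 'a::field) \<Rightarrow> 'a) set" where
  "proj_RM n k = {w. \<exists>c. w = (\<lambda>p. if p \<in> proj_reps n then hom_poly_eval n k c p else 0)}"

definition dual_code :: "'i set \<Rightarrow> ('i \<Rightarrow> 'a::field) set \<Rightarrow> ('i \<Rightarrow> 'a) set" where
  "dual_code I C = {y. (\<forall>p. p \<notin> I \<longrightarrow> y p = 0) \<and> (\<forall>w\<in>C. (\<Sum>p\<in>I. y p * w p) = 0)}"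

definition hull_code :: "'i set \<Rightarrow> ('i \<Rightarrow> 'a::field) set \<Rightarrow> ('i \<Rightarrow> 'a) set" where
  "hull_code I C = C \<inter> dual_code I C"

definition is_LCD :: "'i set \<Rightarrow> ('i \<Rightarrow> 'a::field) set \<Rightarrow> bool" where
  "is_LCD I C \<longleftrightarrow> hull_code I C = {\<lambda>_. 0}"

definition all_ones :: "'i set \<Rightarrow> ('i \<Rightarrow> 'a::field)" where
  "all_ones I = (\<lambda>p. if p \<in> I then 1 else 0)"

end

theory Submission imports Defs "HOL-Computational_Algebra.Polynomial"
begin

lemma card_field_zero: "(of_nat (card (UNIV::'a::{finite,field} set)) :: 'a) = 0"
proof -
  have "(\<Sum>t\<in>(UNIV::'a set). t) = (\<Sum>t\<in>UNIV. t + 1)"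
    by (rule sum.reindex_bij_witness[of _ "\<lambda>t. t + 1" "\<lambda>t. t - 1"]) auto
  also have "\<dots> = (\<Sum>t\<in>UNIV. t) + of_nat (card (UNIV::'a set))"
    by (simp add: sum.distrib)
  finally show ?thesis by simp
qed

lemma card_ge2: "card (UNIV::'a::{finite,field} set) \<ge> 2"
proof -
  have "{0::'a, 1} \<subseteq> UNIV" by auto
  hence "card {0::'a,1} \<le> card (UNIV::'a set)" by (rule card_mono[OF finite_UNIV])
  thus ?thesis by simp
qed

lemma field_fermat:
  fixes x :: "'a::{finite,field}"
  assumes "x \<noteq> 0"
  shows "x ^ (card (UNIV::'a set) - 1) = 1"
proof -
  let ?S = "UNIV - {0::'a}"
  have cS: "card ?S = card (UNIV::'a set) - 1" by (simp add: card_Diff_singleton)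
  have "(\<Prod>t\<in>?S. t) = (\<Prod>t\<in>?S. x * t)"
    by (rule prod.reindex_bij_witness[of _ "\<lambda>t. x * t" "\<lambda>t. t / x"]) (use assms in auto)
  also have "\<dots> = x ^ card ?S * (\<Prod>t\<in>?S. t)" by (simp add: prod.distrib)
  finally have "(\<Prod>t\<in>?S. t) * 1 = (\<Prod>t\<in>?S. t) * x ^ card ?S" by (simp add: mult.commute)
  moreover have "(\<Prod>t\<in>?S. t) \<noteq> 0" by simp
  ultimately have "x ^ card ?S = 1" by (metis mult_left_cancel)
  thus ?thesis using cS by simp
qed

lemma exists_nonroot:
  assumes "1 \<le> r" "r < card (UNIV::'a::{finite,field} set) - 1"
  shows "\<exists>x::'a. x \<noteq> 0 \<and> x ^ r \<noteq> 1"
proof (rule ccontr)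
  assume H: "\<not> ?thesis"
  define p :: "'a poly" where "p = monom 1 r - 1"
  have cp: "coeff p r = 1" using assms by (simp add: p_def coeff_monom)
  hence p0: "p \<noteq> 0" by auto
  have dp: "degree p \<le> r" unfolding p_def
    by (metis degree_diff_le degree_monom_le degree_1 le0)
  have "UNIV - {0} \<subseteq> {x. poly p x = 0}" using H by (auto simp: p_def poly_monom)
  hence "card (UNIV - {0::'a}) \<le> card {x. poly p x = 0}"
    by (intro card_mono poly_roots_finite p0)
  also have "\<dots> \<le> r" using card_poly_roots_bound[OF p0] dp by linarith
  finally show False using assms by (simp add: card_Diff_singleton)
qed

lemma power_sum_zero:
  fixes k :: nat
  assumes "\<not> (1 \<le> k \<and> (card (UNIV::'a::{finite,field} set) - 1) dvd k)"
  shows "(\<Sum>t\<in>(UNIV::'a set). t ^ k) = 0"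
proof (cases "k = 0")
  case True thus ?thesis using card_field_zero[where 'a='a] by simp
next
  case False
  let ?q1 = "card (UNIV::'a set) - 1"
  have q1: "?q1 \<ge> 1" using card_ge2[where 'a='a] by linarith
  define r where "r = k mod ?q1"
  have r1: "1 \<le> r" using assms False unfolding r_def by (auto simp: dvd_eq_mod_eq_0)
  have r2: "r < ?q1" unfolding r_def using q1 by simp
  obtain x :: 'a where x: "x \<noteq> 0" "x ^ r \<noteq> 1" using exists_nonroot[OF r1 r2] by blast
  have "x ^ k = x ^ r * (x ^ ?q1) ^ (k div ?q1)"
    by (simp add: r_def power_add[symmetric] power_mult[symmetric] mult.commute)
  hence xk: "x ^ k \<noteq> 1" using x field_fermat[OF x(1)] by simp
  have "(\<Sum>t\<in>(UNIV::'a set). t ^ k) = (\<Sum>t\<in>UNIV. (x * t) ^ k)"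
    by (rule sum.reindex_bij_witness[of _ "\<lambda>t. x * t" "\<lambda>t. t / x"]) (use x in auto)
  also have "\<dots> = x ^ k * (\<Sum>t\<in>UNIV. t ^ k)" by (simp add: power_mult_distrib sum_distrib_left)
  finally show ?thesis using xk
    by (metis mult_cancel_right1)
qed


definition is_hom :: "nat \<Rightarrow> nat \<Rightarrow> ((nat \<Rightarrow> 'a::field) \<Rightarrow> 'a) \<Rightarrow> bool" where
  "is_hom n k f \<longleftrightarrow> (\<exists>c. \<forall>x. f x = hom_poly_eval n k c x)"

lemma finite_monomials: "finite (monomials n k)"
proof -
  have "monomials n k \<subseteq> {f. \<forall>x. (x \<in> {..n} \<longrightarrow> f x \<in> {..k}) \<and> (x \<notin> {..n} \<longrightarrow> f x = 0)}"
  proof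
    fix a assume a: "a \<in> monomials n k"
    { fix x assume "x \<le> n"
      hence "a x \<le> (\<Sum>i\<le>n. a i)" by (intro member_le_sum) auto
      hence "a x \<le> k" using a by (simp add: monomials_def) }
    thus "a \<in> {f. \<forall>x. (x \<in> {..n} \<longrightarrow> f x \<in> {..k}) \<and> (x \<notin> {..n} \<longrightarrow> f x = 0)}"
      using a by (auto simp: monomials_def)
  qed
  thus ?thesis by (rule finite_subset) (rule finite_set_of_finite_funs; simp)
qed

lemma is_hom_add: "is_hom n k f \<Longrightarrow> is_hom n k g \<Longrightarrow> is_hom n k (\<lambda>x. f x + g x)"
  unfolding is_hom_def hom_poly_eval_def
  apply clarify
  subgoal for c1 c2 by (rule exI[of _ "\<lambda>a. c1 a + c2 a"]) (simp add: distrib_right sum.distrib)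
  done

lemma is_hom_scale: "is_hom n k f \<Longrightarrow> is_hom n k (\<lambda>x. t * f x)"
  unfolding is_hom_def hom_poly_eval_def
  apply clarify
  subgoal for c by (rule exI[of _ "\<lambda>a. t * c a"]) (simp add: sum_distrib_left mult.assoc)
  done

lemma is_hom_diff: "is_hom n k f \<Longrightarrow> is_hom n k g \<Longrightarrow> is_hom n k (\<lambda>x. f x - g x)"
  using is_hom_add[of n k f "\<lambda>x. (-1) * g x"] is_hom_scale[of n k g "-1"] by simp

lemma monomials_0: "monomials n 0 = {\<lambda>_. 0}"
proof (intro set_eqI iffI)
  fix a assume "a \<in> monomials n 0"
  hence "\<forall>i>n. a i = 0" "\<forall>i\<le>n. a i = 0" by (auto simp: monomials_def)
  hence "\<forall>i. a i = 0" by (metis not_le)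
  thus "a \<in> {\<lambda>_. 0}" by auto
qed (auto simp: monomials_def)

lemma is_hom_const: "is_hom n 0 (\<lambda>x. t)"
  unfolding is_hom_def hom_poly_eval_def monomials_0 by (rule exI[of _ "\<lambda>_. t"]) simp

lemma is_hom_var:
  assumes "i \<le> n" shows "is_hom n 1 (\<lambda>x. x i)"
proof -
  define e :: "nat \<Rightarrow> nat" where "e = (\<lambda>j. if j = i then 1 else 0)"
  have e: "e \<in> monomials n 1" using assms by (auto simp: monomials_def e_def)
  have pe: "(\<Prod>j\<le>n. x j ^ e j) = x i" for x :: "nat \<Rightarrow> 'a"
  proof -
    have "(\<Prod>j\<le>n. x j ^ e j) = (\<Prod>j\<le>n. if j = i then x j else 1)"
      by (rule prod.cong) (auto simp: e_def)
    thus ?thesis using assms by simp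
  qed
  show ?thesis unfolding is_hom_def hom_poly_eval_def
  proof (rule exI[of _ "\<lambda>a. if a = e then 1 else 0"], intro allI)
    fix x :: "nat \<Rightarrow> 'a"
    have "(\<Sum>a\<in>monomials n 1. (if a = e then 1 else 0) * (\<Prod>i\<le>n. x i ^ a i))
        = (\<Sum>a\<in>monomials n 1. if a = e then (\<Prod>i\<le>n. x i ^ a i) else 0)"
      by (rule sum.cong) auto
    also have "\<dots> = x i" using e pe finite_monomials by simp
    finally show "x i = (\<Sum>a\<in>monomials n 1. (if a = e then 1 else 0) * (\<Prod>i\<le>n. x i ^ a i))" by simp
  qed
qed

lemma is_hom_mult:
  assumes "is_hom n k1 f" "is_hom n k2 g"
  shows "is_hom n (k1 + k2) (\<lambda>x. f x * g x)"
proof -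
  obtain c1 where c1: "\<And>x. f x = hom_poly_eval n k1 c1 x" using assms(1) by (auto simp: is_hom_def)
  obtain c2 where c2: "\<And>x. g x = hom_poly_eval n k2 c2 x" using assms(2) by (auto simp: is_hom_def)
  define S where "S = monomials n k1 \<times> monomials n k2"
  define s where "s = (\<lambda>(a::nat\<Rightarrow>nat, b::nat\<Rightarrow>nat). (\<lambda>i. a i + b i))"
  define h where "h = (\<lambda>(a,b). c1 a * c2 b)"
  define c where "c = (\<lambda>m. \<Sum>ab\<in>{ab. ab \<in> S \<and> s ab = m}. h ab)"
  have fS: "finite S" unfolding S_def using finite_monomials by simp
  have sS: "s ` S \<subseteq> monomials n (k1 + k2)"
    by (auto simp: S_def s_def monomials_def sum.distrib)
  have P: "(\<Prod>i\<le>n. x i ^ a i) * (\<Prod>i\<le>n. x i ^ b i) = (\<Prod>i\<le>n. x i ^ (a i + b i))"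
    for x :: "nat \<Rightarrow> 'a" and a b by (simp add: power_add prod.distrib)
  show ?thesis unfolding is_hom_def
  proof (rule exI[of _ c], intro allI)
    fix x :: "nat \<Rightarrow> 'a"
    let ?P = "\<lambda>a. \<Prod>i\<le>n. x i ^ a i"
    have "f x * g x = (\<Sum>a\<in>monomials n k1. \<Sum>b\<in>monomials n k2. (c1 a * ?P a) * (c2 b * ?P b))"
      by (simp add: c1 c2 hom_poly_eval_def sum_product)
    also have "\<dots> = (\<Sum>ab\<in>S. h ab * ?P (s ab))"
      unfolding S_def sum.cartesian_product
      by (rule sum.cong) (auto simp: h_def s_def P[symmetric] mult_ac)
    also have "\<dots> = (\<Sum>m\<in>monomials n (k1+k2). \<Sum>ab\<in>{ab. ab \<in> S \<and> s ab = m}. h ab * ?P (s ab))"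
      by (rule sum.group[OF fS finite_monomials sS, symmetric])
    also have "\<dots> = (\<Sum>m\<in>monomials n (k1+k2). c m * ?P m)"
      unfolding c_def sum_distrib_right by (intro sum.cong refl) auto
    finally show "f x * g x = hom_poly_eval n (k1 + k2) c x" by (simp add: hom_poly_eval_def)
  qed
qed

lemma is_hom_eqdeg: "is_hom n k f \<Longrightarrow> k = k' \<Longrightarrow> is_hom n k' f" by simp

lemma is_hom_power: "is_hom n d f \<Longrightarrow> is_hom n (m * d) (\<lambda>x. f x ^ m)"
proof (induction m)
  case 0 thus ?case using is_hom_const by simp
next
  case (Suc m)
  thus ?case using is_hom_mult[OF Suc.prems Suc.IH[OF Suc.prems]] by (simp add: add.commute)
qed

lemma is_hom_prod:
  assumes "finite A" "\<And>i. i \<in> A \<Longrightarrow> is_hom n d (f i)"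
  shows "is_hom n (card A * d) (\<lambda>x. \<Prod>i\<in>A. f i x)"
  using assms
proof (induction A rule: finite_induct)
  case empty thus ?case using is_hom_const by simp
next
  case (insert a A)
  have "is_hom n (d + card A * d) (\<lambda>x. f a x * (\<Prod>i\<in>A. f i x))"
    by (rule is_hom_mult) (use insert in auto)
  thus ?case using insert by simp
qed

lemma hom_eval_scale:
  "hom_poly_eval n k c (\<lambda>i. t * x i) = t ^ k * hom_poly_eval n k c x"
proof -
  have "(\<Prod>i\<le>n. (t * x i) ^ a i) = t ^ k * (\<Prod>i\<le>n. x i ^ a i)" if "a \<in> monomials n k" for a
  proof -
    have "(\<Prod>i\<le>n. t ^ a i) = t ^ (\<Sum>i\<le>n. a i)" by (simp add: power_sum)
    thus ?thesis using that by (simp add: power_mult_distrib prod.distrib monomials_def)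
  qed
  thus ?thesis unfolding hom_poly_eval_def sum_distrib_left
    by (intro sum.cong) (auto simp: mult_ac)
qed


definition Xs :: "nat \<Rightarrow> (nat \<Rightarrow> 'a::zero) set" where
  "Xs m = {x. \<forall>i\<ge>m. x i = 0}"

lemma finite_Xs: "finite (Xs m :: (nat \<Rightarrow> 'a::{finite,zero}) set)"
proof -
  have "Xs m \<subseteq> {f::nat\<Rightarrow>'a. \<forall>x. (x \<in> {..<m} \<longrightarrow> f x \<in> UNIV) \<and> (x \<notin> {..<m} \<longrightarrow> f x = 0)}"
    by (auto simp: Xs_def)
  thus ?thesis by (rule finite_subset) (rule finite_set_of_finite_funs; simp)
qed

lemma sum_prod_Xs:
  fixes g :: "nat \<Rightarrow> 'a::{finite,field} \<Rightarrow> 'a"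
  shows "(\<Sum>x\<in>Xs m. \<Prod>i<m. g i (x i)) = (\<Prod>i<m. \<Sum>t\<in>UNIV. g i t)"
proof (induction m)
  case 0
  have "Xs 0 = {(\<lambda>_. 0) :: nat \<Rightarrow> 'a}" by (auto simp: Xs_def)
  thus ?case by simp
next
  case (Suc m)
  have "(\<Sum>x\<in>Xs (Suc m). \<Prod>i<Suc m. g i (x i))
      = (\<Sum>xt\<in>Xs m \<times> UNIV. (\<Prod>i<m. g i (fst xt i)) * g m (snd xt))"
  proof (rule sum.reindex_bij_witness[of _ "\<lambda>xt. (fst xt)(m := snd xt)" "\<lambda>x. (x(m := 0), x m)"])
    fix x :: "nat \<Rightarrow> 'a" assume "x \<in> Xs (Suc m)"
    thus "(\<Prod>i<m. g i (fst (x(m := 0), x m) i)) * g m (snd (x(m := 0), x m)) = (\<Prod>i<Suc m. g i (x i))"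
      by (simp add: lessThan_Suc)
  qed (auto simp: Xs_def)
  also have "\<dots> = (\<Sum>x\<in>Xs m. \<Prod>i<m. g i (x i)) * (\<Sum>t\<in>UNIV. g m t)"
    by (simp add: sum_product sum.cartesian_product split_beta)
  finally show ?case using Suc by simp
qed

lemma normalize_point:
  fixes x :: "nat \<Rightarrow> 'a::field"
  assumes "\<forall>i>n. x i = 0" "x \<noteq> (\<lambda>_. 0)"
  shows "\<exists>p\<in>proj_reps n. \<exists>t. t \<noteq> 0 \<and> x = (\<lambda>i. t * p i)"
proof -
  obtain i0 where i0: "x i0 \<noteq> 0" using assms(2) by auto
  define j where "j = (LEAST i. x i \<noteq> 0)"
  have xj: "x j \<noteq> 0" unfolding j_def by (rule LeastI[of _ i0]) (rule i0)
  have jn: "j \<le> n" using xj assms(1) by (meson not_le)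
  define p where "p = (\<lambda>i. inverse (x j) * x i)"
  have z: "(p i \<noteq> 0) = (x i \<noteq> 0)" for i using xj by (simp add: p_def)
  have lp: "(LEAST i. p i \<noteq> 0) = j" unfolding z j_def ..
  have "p \<in> proj_reps n" unfolding proj_reps_def
    using lp xj jn assms(1) by (auto simp: p_def)
  moreover have "x = (\<lambda>i. x j * p i)" using xj by (simp add: p_def fun_eq_iff)
  ultimately show ?thesis using xj by blast
qed

lemma proj_reps_eq:
  fixes x p :: "nat \<Rightarrow> 'a::field"
  assumes "x \<in> proj_reps n" "p \<in> proj_reps n" "\<And>i. x i = t * p i"
  shows "x = p"
proof -
  have t0: "t \<noteq> 0"
  proof
    assume "t = 0"
    thus False using assms(1,3) by (auto simp: proj_reps_def)
  qed
  have z: "(x i \<noteq> 0) = (p i \<noteq> 0)" for i using t0 assms(3) by simp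
  have "(LEAST i. x i \<noteq> 0) = (LEAST i. p i \<noteq> 0)" unfolding z ..
  hence "t = 1" using assms by (auto simp: proj_reps_def)
  thus ?thesis using assms(3) by auto
qed

lemma finite_proj_reps: "finite (proj_reps n :: (nat \<Rightarrow> 'a::{finite,field}) set)"
proof -
  have "proj_reps n \<subseteq> (Xs (Suc n) :: (nat \<Rightarrow> 'a) set)" by (auto simp: proj_reps_def Xs_def)
  thus ?thesis using finite_Xs finite_subset by blast
qed

lemma part1:
  fixes n l :: nat
  assumes "1 \<le> l" "l \<le> n * (card (UNIV :: 'a::{finite,field} set) - 1)"
    and "(card (UNIV :: 'a set) - 1) dvd l"
  shows "all_ones (proj_reps n) \<notin> (proj_RM n l :: ((nat \<Rightarrow> 'a) \<Rightarrow> 'a) set)"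
proof
  let ?q1 = "card (UNIV :: 'a set) - 1"
  have q1: "?q1 \<ge> 1" using card_ge2[where 'a='a] by linarith
  assume "all_ones (proj_reps n) \<in> (proj_RM n l :: ((nat \<Rightarrow> 'a) \<Rightarrow> 'a) set)"
  then obtain c :: "(nat \<Rightarrow> nat) \<Rightarrow> 'a" where
    c: "all_ones (proj_reps n) = (\<lambda>p. if p \<in> proj_reps n then hom_poly_eval n l c p else 0)"
    by (auto simp: proj_RM_def)
  have one: "hom_poly_eval n l c p = 1" if "p \<in> proj_reps n" for p
    using fun_cong[OF c, of p] that by (simp add: all_ones_def)
  let ?F = "hom_poly_eval n l c"
  have F: "?F x = (if x = (\<lambda>_. 0) then 0 else 1)" if "x \<in> Xs (Suc n)" for x
  proof (cases "x = (\<lambda>_. 0)")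
    case True
    have H: "(\<Prod>i\<le>n. (0::'a) ^ a i) = 0" if "a \<in> monomials n l" for a
    proof -
      have "\<exists>i\<le>n. a i \<noteq> 0"
      proof (rule ccontr)
        assume "\<not> ?thesis"
        hence "(\<Sum>i\<le>n. a i) = 0" by simp
        thus False using that assms(1) by (simp add: monomials_def)
      qed
      thus ?thesis by auto
    qed
    have "?F x = (\<Sum>a\<in>monomials n l. c a * (\<Prod>i\<le>n. (0::'a) ^ a i))"
      using True by (simp add: hom_poly_eval_def)
    also have "\<dots> = 0" by (rule sum.neutral) (use H in simp)
    finally show ?thesis using True by simp
  next
    case False
    have "\<forall>i>n. x i = 0" using that by (simp add: Xs_def)
    then obtain p t where p: "p \<in> proj_reps n" "t \<noteq> 0" "x = (\<lambda>i. t * p i)"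
      using normalize_point False by blast
    obtain m where m: "l = ?q1 * m" using assms(3) by blast
    have "?F x = t ^ l" using p one by (simp add: hom_eval_scale)
    also have "\<dots> = 1" using m field_fermat[OF p(2)] by (simp add: power_mult)
    finally show ?thesis using False by simp
  qed
  have z: "((\<lambda>_. 0)::nat\<Rightarrow>'a) \<in> Xs (Suc n)" by (simp add: Xs_def)
  have "(\<Sum>x\<in>Xs (Suc n). ?F x) = (\<Sum>x\<in>Xs (Suc n). 1 - (if x = ((\<lambda>_. 0)::nat\<Rightarrow>'a) then 1 else 0))"
    by (rule sum.cong) (auto simp: F)
  also have "\<dots> = (\<Sum>x\<in>(Xs (Suc n)::(nat\<Rightarrow>'a) set). (\<Prod>i<Suc n. (\<lambda>i t. (1::'a)) i (x i))) - 1"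
    using z by (simp add: sum_subtractf sum.delta[OF finite_Xs])
  also have "\<dots> = - 1"
    using sum_prod_Xs[of "\<lambda>i t. (1::'a)" "Suc n"] card_field_zero[where 'a='a] by simp
  finally have lhs: "(\<Sum>x\<in>Xs (Suc n). ?F x) = - 1" .
  have zero_a: "(\<Sum>x\<in>Xs (Suc n). \<Prod>i<Suc n. (x i :: 'a) ^ a i) = 0" if "a \<in> monomials n l" for a
  proof -
    have "\<exists>i\<le>n. \<not> (1 \<le> a i \<and> ?q1 dvd a i)"
    proof (rule ccontr)
      assume "\<not> ?thesis"
      hence "\<forall>i\<le>n. ?q1 \<le> a i" by (metis dvd_imp_le not_le less_one le_less_trans)
      hence "(\<Sum>i\<le>n. ?q1) \<le> (\<Sum>i\<le>n. a i)" by (intro sum_mono) auto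
      hence "Suc n * ?q1 \<le> l" using that by (simp add: monomials_def)
      thus False using assms(2) q1 by simp
    qed
    then obtain i where i: "i \<le> n" "\<not> (1 \<le> a i \<and> ?q1 dvd a i)" by blast
    have "(\<Sum>t\<in>(UNIV::'a set). t ^ a i) = 0" by (rule power_sum_zero) (use i in simp)
    hence "(\<Prod>i<Suc n. \<Sum>t\<in>(UNIV::'a set). t ^ a i) = 0"
      using i(1) by (intro prod_zero) auto
    thus ?thesis using sum_prod_Xs[of "\<lambda>i (t::'a). t ^ a i" "Suc n"] by simp
  qed
  have "(\<Sum>x\<in>Xs (Suc n). ?F x) = (\<Sum>a\<in>monomials n l. c a * (\<Sum>x\<in>Xs (Suc n). \<Prod>i<Suc n. (x i) ^ a i))"
    unfolding hom_poly_eval_def lessThan_Suc_atMost sum_distrib_left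
    by (rule sum.swap)
  also have "\<dots> = 0" using zero_a by simp
  finally show False using lhs by simp
qed


definition Gp :: "nat \<Rightarrow> nat \<Rightarrow> nat \<Rightarrow> (nat \<Rightarrow> 'a::{finite,field}) \<Rightarrow> (nat \<Rightarrow> 'a) \<Rightarrow> 'a" where
  "Gp n q1 k p x = (\<Prod>i\<in>{..n}-{k}. x k ^ q1 - (x i - p i * x k) ^ q1)"

definition Tk :: "nat \<Rightarrow> nat \<Rightarrow> nat \<Rightarrow> (nat \<Rightarrow> 'a::{finite,field}) \<Rightarrow> 'a" where
  "Tk n q1 k x = (\<Prod>i\<in>{..n}-{k}. - (x i ^ q1))"

lemma Gp_hom:
  assumes "k \<le> n"
  shows "is_hom n (n * q1) (Gp n q1 k p)"
proof -
  have f: "is_hom n q1 (\<lambda>x. x k ^ q1 - (x i - p i * x k) ^ q1)" if "i \<le> n" for i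
  proof -
    have a: "is_hom n (q1 * 1) (\<lambda>x. x k ^ q1)" by (rule is_hom_power[OF is_hom_var[OF assms]])
    have b: "is_hom n 1 (\<lambda>x. x i - p i * x k)"
      by (rule is_hom_diff[OF is_hom_var[OF that] is_hom_scale[OF is_hom_var[OF assms]]])
    have c: "is_hom n (q1 * 1) (\<lambda>x. (x i - p i * x k) ^ q1)" by (rule is_hom_power[OF b])
    show ?thesis using is_hom_diff[OF a c] by simp
  qed
  have "is_hom n (card ({..n}-{k}) * q1) (\<lambda>x. \<Prod>i\<in>{..n}-{k}. x k ^ q1 - (x i - p i * x k) ^ q1)"
    by (rule is_hom_prod) (use f in auto)
  moreover have "card ({..n}-{k}) = n" using assms by simp
  ultimately show ?thesis by (simp add: Gp_def[abs_def])
qed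

lemma Gp_nonzero:
  fixes x p :: "nat \<Rightarrow> 'a::{finite,field}"
  assumes "x k \<noteq> 0" "p k = 1" "k \<le> n"
  shows "Gp n (card (UNIV::'a set) - 1) k p x = (if \<forall>i\<le>n. x i = p i * x k then 1 else 0)"
proof -
  let ?q1 = "card (UNIV::'a set) - 1"
  have q1: "?q1 \<ge> 1" using card_ge2[where 'a='a] by linarith
  have fac: "x k ^ ?q1 - (x i - p i * x k) ^ ?q1 = (if x i = p i * x k then 1 else 0)" for i
  proof (cases "x i = p i * x k")
    case True thus ?thesis using field_fermat[OF assms(1)] q1 by simp
  next
    case False
    hence "x i - p i * x k \<noteq> 0" by simp
    thus ?thesis using field_fermat[OF assms(1)] field_fermat[of "x i - p i * x k"] False by simp
  qed
  have "Gp n ?q1 k p x = (\<Prod>i\<in>{..n}-{k}. (if x i = p i * x k then 1 else 0))"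
    unfolding Gp_def using fac by simp
  also have "\<dots> = (if \<forall>i\<in>{..n}-{k}. x i = p i * x k then 1 else 0)"
  proof (cases "\<forall>i\<in>{..n}-{k}. x i = p i * x k")
    case True thus ?thesis by simp
  next
    case False
    then obtain i where "i \<in> {..n}-{k}" "x i \<noteq> p i * x k" by blast
    thus ?thesis by (intro trans[OF prod_zero]) auto
  qed
  also have "(\<forall>i\<in>{..n}-{k}. x i = p i * x k) = (\<forall>i\<le>n. x i = p i * x k)"
    using assms(2) by auto
  finally show ?thesis .
qed

lemma Gp_zero:
  fixes x p :: "nat \<Rightarrow> 'a::{finite,field}"
  assumes "x k = 0"
  shows "Gp n (card (UNIV::'a set) - 1) k p x = Tk n (card (UNIV::'a set) - 1) k x"
proof -
  have q1: "card (UNIV::'a set) - 1 \<ge> 1" using card_ge2[where 'a='a] by linarith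
  hence z: "(0::'a) ^ (card (UNIV::'a set) - 1) = 0" by (simp add: zero_power)
  show ?thesis unfolding Gp_def Tk_def by (simp only: assms mult_zero_right diff_zero z diff_0)
qed

lemma key:
  fixes w :: "(nat \<Rightarrow> 'a::{finite,field}) \<Rightarrow> 'a" and n :: nat
  defines "q1 \<equiv> card (UNIV::'a set) - 1"
  assumes dual: "\<And>v. v \<in> (proj_RM n (n * q1) :: ((nat \<Rightarrow> 'a) \<Rightarrow> 'a) set) \<Longrightarrow>
                    (\<Sum>x\<in>proj_reps n. w x * v x) = 0"
    and p: "p \<in> proj_reps n" and k: "k \<le> n" "p k \<noteq> 0"
  shows "w p = - (\<Sum>x\<in>proj_reps n \<inter> {x. x k = 0}. w x * Tk n q1 k x)"
proof -
  let ?I = "proj_reps n :: (nat \<Rightarrow> 'a) set"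
  define p' where "p' = (\<lambda>i. p i / p k)"
  have p'k: "p' k = 1" using k by (simp add: p'_def)
  obtain c where c: "\<And>x. Gp n q1 k p' x = hom_poly_eval n (n * q1) c x"
    using Gp_hom[OF k(1), of q1 p'] by (auto simp: is_hom_def)
  have "(\<lambda>x. if x \<in> ?I then Gp n q1 k p' x else 0) \<in> (proj_RM n (n * q1) :: ((nat \<Rightarrow> 'a) \<Rightarrow> 'a) set)"
    unfolding proj_RM_def c by blast
  from dual[OF this] have "(\<Sum>x\<in>?I. w x * Gp n q1 k p' x) = 0" by simp
  moreover
  have "(\<Sum>x\<in>?I. w x * Gp n q1 k p' x)
      = (\<Sum>x\<in>?I. if x k = 0 then w x * Tk n q1 k x else w x * (if x = p then 1 else 0))"
  proof (rule sum.cong[OF refl])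
    fix x assume x: "x \<in> ?I"
    show "w x * Gp n q1 k p' x = (if x k = 0 then w x * Tk n q1 k x else w x * (if x = p then 1 else 0))"
    proof (cases "x k = 0")
      case True thus ?thesis unfolding q1_def using Gp_zero[of x k n p'] True by simp
    next
      case False
      have "(\<forall>i\<le>n. x i = p' i * x k) = (x = p)"
      proof
        assume H: "\<forall>i\<le>n. x i = p' i * x k"
        have "\<And>i. x i = (x k / p k) * p i"
        proof -
          fix i show "x i = (x k / p k) * p i"
          proof (cases "i \<le> n")
            case True thus ?thesis using H by (simp add: p'_def)
          next
            case False thus ?thesis using x p by (simp add: proj_reps_def)
          qed
        qed
        thus "x = p" using proj_reps_eq[OF x p] by blast
      next
        assume "x = p" thus "\<forall>i\<le>n. x i = p' i * x k" using k by (simp add: p'_def)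
      qed
      thus ?thesis using False Gp_nonzero[of x k p' n] False p'k k(1) unfolding q1_def by simp
    qed
  qed
  also have "\<dots> = (\<Sum>x\<in>?I \<inter> {x. x k = 0}. w x * Tk n q1 k x)
                 + (\<Sum>x\<in>?I \<inter> - {x. x k = 0}. w x * (if x = p then 1 else 0))"
    by (rule sum.If_cases[OF finite_proj_reps])
  also have "(\<Sum>x\<in>?I \<inter> - {x. x k = 0}. w x * (if x = p then 1 else 0)) = w p"
  proof -
    have "(\<Sum>x\<in>?I \<inter> - {x. x k = 0}. w x * (if x = p then 1 else 0))
        = (\<Sum>x\<in>?I \<inter> - {x. x k = 0}. (if x = p then w x else 0))"
      by (rule sum.cong) auto
    also have "\<dots> = w p" using p k finite_proj_reps[where 'a='a, of n] by simp
    finally show ?thesis .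
  qed
  ultimately show ?thesis by (simp add: add_eq_0_iff)
qed


theorem mainTheorem3:
  fixes n :: nat
    and C :: "nat \<Rightarrow> ((nat \<Rightarrow> 'a::{finite,field}) \<Rightarrow> 'a) set"
  defines "C \<equiv> proj_RM n"
  assumes "n \<ge> 1"
  shows "(\<forall>l::nat. 1 \<le> l \<and> l \<le> n * (card (UNIV :: 'a set) - 1)
             \<and> (card (UNIV :: 'a set) - 1) dvd l
           \<longrightarrow> all_ones (proj_reps n) \<notin> C l)
       \<and> is_LCD (proj_reps n) (C (n * (card (UNIV :: 'a set) - 1)))"
proof
  show "\<forall>l::nat. 1 \<le> l \<and> l \<le> n * (card (UNIV :: 'a set) - 1)
             \<and> (card (UNIV :: 'a set) - 1) dvd l
           \<longrightarrow> all_ones (proj_reps n) \<notin> C l"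
    unfolding C_def using part1 by blast
next
  let ?q1 = "card (UNIV :: 'a set) - 1"
  let ?I = "proj_reps n :: (nat \<Rightarrow> 'a) set"
  let ?D = "proj_RM n (n * ?q1) :: ((nat \<Rightarrow> 'a) \<Rightarrow> 'a) set"
  have q1: "?q1 \<ge> 1" using card_ge2[where 'a='a] by linarith
  have "hull_code ?I ?D = {\<lambda>_. 0}"
  proof (intro set_eqI iffI)
    fix w assume w: "w \<in> hull_code ?I ?D"
    then obtain c0 where c0: "w = (\<lambda>p. if p \<in> ?I then hom_poly_eval n (n * ?q1) c0 p else 0)"
      unfolding hull_code_def proj_RM_def by blast
    have out: "\<And>p. p \<notin> ?I \<Longrightarrow> w p = 0" using c0 by simp
    have dual: "\<And>v. v \<in> ?D \<Longrightarrow> (\<Sum>x\<in>?I. w x * v x) = 0"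
      using w by (auto simp: hull_code_def dual_code_def)
    define u :: "nat \<Rightarrow> 'a" where "u = (\<lambda>i. if i \<le> n then 1 else 0)"
    have lu: "(LEAST i. u i \<noteq> 0) = 0" by (rule Least_equality) (auto simp: u_def)
    have uI: "u \<in> ?I" unfolding proj_reps_def using lu by (auto simp: u_def)
    have const: "w p = w u" if p: "p \<in> ?I" for p
    proof -
      define j where "j = (LEAST i. p i \<noteq> 0)"
      obtain i0 where i0: "i0 \<le> n" "p i0 \<noteq> 0" using p by (auto simp: proj_reps_def)
      have pj: "p j = 1" using p by (simp add: proj_reps_def j_def)
      have jn: "j \<le> n" using i0 unfolding j_def by (meson Least_le le_trans)
      have uj: "u j \<noteq> 0" using jn by (simp add: u_def)
      show ?thesis
        using key[OF dual p jn] key[OF dual uI jn uj] pj by simp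
    qed
    have "w u = 0"
    proof (rule ccontr)
      assume nz: "w u \<noteq> 0"
      have "all_ones ?I \<in> ?D"
      proof -
        have "all_ones ?I = (\<lambda>p. if p \<in> ?I then hom_poly_eval n (n * ?q1) (\<lambda>a. c0 a / w u) p else 0)"
        proof
          fix p show "all_ones ?I p = (if p \<in> ?I then hom_poly_eval n (n * ?q1) (\<lambda>a. c0 a / w u) p else 0)"
          proof (cases "p \<in> ?I")
            case True
            have "hom_poly_eval n (n * ?q1) (\<lambda>a. c0 a / w u) p = hom_poly_eval n (n * ?q1) c0 p / w u"
              unfolding hom_poly_eval_def sum_divide_distrib by (rule sum.cong) auto
            also have "\<dots> = w p / w u" using True c0 by simp
            also have "\<dots> = 1" using const[OF True] nz by simp
            finally show ?thesis using True by (simp add: all_ones_def)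
          qed (simp add: all_ones_def)
        qed
        thus ?thesis unfolding proj_RM_def by blast
      qed
      moreover have "all_ones ?I \<notin> ?D"
        by (rule part1) (use q1 assms(2) in auto)
      ultimately show False by blast
    qed
    hence "\<And>p. w p = 0" using const out by metis
    thus "w \<in> {\<lambda>_. 0}" by auto
  next
    fix w :: "(nat \<Rightarrow> 'a) \<Rightarrow> 'a" assume "w \<in> {\<lambda>_. 0}"
    hence w: "w = (\<lambda>_. 0)" by simp
    have "w \<in> ?D" unfolding proj_RM_def w
      by (rule CollectI, rule exI[of _ "\<lambda>_. 0"]) (auto simp: hom_poly_eval_def)
    moreover have "w \<in> dual_code ?I ?D" by (simp add: dual_code_def w)
    ultimately show "w \<in> hull_code ?I ?D" by (simp add: hull_code_def)
  qed
  thus "is_LCD (proj_reps n) (C (n * ?q1))" unfolding is_LCD_def C_def .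
qed

end
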